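(* (1) For $[N]\in T^o$, $X_{[N]}$ is smooth; in particular $i(T^o)\subset S^o$. (2) For $[N]\in D^o_T$, $\mathrm{Sing}(X_{[N]})$ consists of nodes; in particular $i(D^o_T)\subset D^o$. (3) The Zariski closed subset $T\setminus(T^o\cup D^o_T)$ has codimension at least $2$ in $T$.
   Context: Use coordinates $x_1,\dots,x_6$ on $\mathbf P^5$. For a rank-3 matrix $N=(n_{ij})=(\mathbf n_1,\dots,\mathbf n_6)\in M_{3,6}(\mathbf C)$ let $\Delta_{ijk}(N)=\det(\mathbf n_i,\mathbf n_j,\mathbf n_k)$ and $X_{[N]}=\{[x]\in\mathbf P^5:\sum_{k=1}^6x_k^2\mathbf n_k=\mathbf 0\}$. Let $T=\mathrm{Gr}(3,\mathbf C^6)=GL_3(\mathbf C)\backslash\{N:\mathrm{rk}N=3\}$, $T_{ijk}=\{[N]:\Delta_{ijk}(N)=0\}$, $T^o=T\setminus\bigcup_{i<j<k}T_{ijk}$, $T^o_{ijk}=T_{ijk}\setminus\bigcup_{\{l,m,n\}\ne\{i,j,k\}}T_{lmn}$, $D^o_T=\bigcup_{i<j<k}T^o_{ijk}$. Let $V$ be the space of quadratic forms spanned by the monomials $x_ix_j$ with $i,j\le3$ and $x_ix_j$ with $i,j\ge4$, $S=\mathrm{Gr}(3,V)$, and $i:T\to S$, $[N]\mapsto$ the span of $\sum_j n_{kj}x_j^2$, $k=1,2,3$; for $s\in S$, $X_s\subset\mathbf P^5$ is the common zero scheme of the forms in $s$, so $X_{i([N])}=X_{[N]}$. With $\pi:\mathcal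 X\to S$ the family of the $X_s$: $S^*=\{s:\pi$ flat along $X_s\}$, $S^o=\{s\in S^*:X_s$ smooth$\}$, $D^o=\{s\in S^*\setminus S^o:\mathrm{Sing}X_s$ consists of nodes$\}$. *)

theory Defs
  imports "HOL-Analysis.Analysis" "HOL-Library.Extended_Nat"
begin

type_synonym mat36 = "complex^6^3"

definition rank3 :: "mat36 \<Rightarrow> bool" where
  "rank3 N \<longleftrightarrow> (\<forall>c::complex^3. (\<forall>j. (\<Sum>k\<in>UNIV. c$k * N$k$j) = 0) \<longrightarrow> c = 0)"

definition Delta :: "mat36 \<Rightarrow> 6 \<Rightarrow> 6 \<Rightarrow> 6 \<Rightarrow> complex" where
  "Delta N i j k = det (\<chi> r s::3. N $ r $ (if s = 1 then i else if s = 2 then j else k))"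

definition T_o :: "(mat36) set" where
  "T_o = {N. rank3 N \<and> (\<forall>i j k. i < j \<and> j < k \<longrightarrow> Delta N i j k \<noteq> 0)}"

definition T_o_ijk :: "6 \<Rightarrow> 6 \<Rightarrow> 6 \<Rightarrow> (mat36) set" where
  "T_o_ijk i j k = {N. rank3 N \<and> Delta N i j k = 0 \<and>
      (\<forall>l m n. l < m \<and> m < n \<and> (l, m, n) \<noteq> (i, j, k) \<longrightarrow> Delta N l m n \<noteq> 0)}"

definition D_o_T :: "(mat36) set" where
  "D_o_T = (\<Union>{T_o_ijk i j k | i j k. i < j \<and> j < k})"

definition qf :: "complex^6^6 \<Rightarrow> complex^6 \<Rightarrow> complex" where
  "qf A x = (\<Sum>i\<in>UNIV. \<Sum>j\<in>UNIV. A$i$j * x$i * x$j)"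

definition bqf :: "complex^6^6 \<Rightarrow> complex^6 \<Rightarrow> complex^6 \<Rightarrow> complex" where
  "bqf A x y = (\<Sum>i\<in>UNIV. \<Sum>j\<in>UNIV. A$i$j * (x$i * y$j + y$i * x$j))"

definition grad :: "complex^6^6 \<Rightarrow> complex^6 \<Rightarrow> complex^6" where
  "grad A x = (\<chi> i. \<Sum>j\<in>UNIV. (A$i$j + A$j$i) * x$j)"

text \<open>Points of X_Q, represented by nonzero vectors of the affine cone
  (all notions below are invariant under rescaling x).\<close>
definition cone_pts :: "(3 \<Rightarrow> complex^6^6) \<Rightarrow> (complex^6) set" where
  "cone_pts Q = {x. x \<noteq> 0 \<and> (\<forall>k. qf (Q k) x = 0)}"

definition jac_rel :: "(3 \<Rightarrow> complex^6^6) \<Rightarrow> complex^6 \<Rightarrow> (complex^3) set" where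
  "jac_rel Q x = {c. (\<forall>i. (\<Sum>k\<in>UNIV. c$k * grad (Q k) x $ i) = 0)}"

text \<open>Jacobian criterion: X_Q is smooth at x iff the Jacobian matrix of the three
  defining forms has rank 3 at x.\<close>
definition smooth_at :: "(3 \<Rightarrow> complex^6^6) \<Rightarrow> complex^6 \<Rightarrow> bool" where
  "smooth_at Q x \<longleftrightarrow> jac_rel Q x = {0}"

definition smooth_ci :: "(3 \<Rightarrow> complex^6^6) \<Rightarrow> bool" where
  "smooth_ci Q \<longleftrightarrow> (\<forall>x\<in>cone_pts Q. smooth_at Q x)"

definition sing_pts :: "(3 \<Rightarrow> complex^6^6) \<Rightarrow> (complex^6) set" where
  "sing_pts Q = {x\<in>cone_pts Q. \<not> smooth_at Q x}"

text \<open>Node (ordinary double point): the Jacobian has rank exactly 2 at x, so the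
  relations are spanned by one nonzero c; then locally X is a hypersurface in the
  smooth threefold cut out by two of the forms, with local equation the form
  H = sum c_k Q_k, and x is a node iff the Hessian of H restricted to the Zariski
  tangent space W (of the cone) is nondegenerate modulo the line through x, i.e.
  the radical of the bilinear form of H on W is exactly span{x}.\<close>
definition node_at :: "(3 \<Rightarrow> complex^6^6) \<Rightarrow> complex^6 \<Rightarrow> bool" where
  "node_at Q x \<longleftrightarrow> x \<in> cone_pts Q \<and>
     (\<exists>c. c \<noteq> 0 \<and> c \<in> jac_rel Q x \<and>
        (\<forall>d\<in>jac_rel Q x. \<exists>t. d = t *s c) \<and>
        (let H = (\<chi> i j. \<Sum>k\<in>UNIV. c$k * Q k $ i $ j);
             W = {v. \<forall>k. (\<Sum>i\<in>UNIV. grad (Q k) x $ i * v $ i) = 0}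
         in \<forall>v\<in>W. (\<forall>w\<in>W. bqf H v w = 0) \<longrightarrow> (\<exists>t. v = t *s x)))"

definition QN :: "mat36 \<Rightarrow> 3 \<Rightarrow> complex^6^6" where
  "QN N k = (\<chi> i j. if i = j then N$k$i else 0)"

inductive_set poly_fun :: "(mat36 \<Rightarrow> complex) set" where
  pf_const: "(\<lambda>_. c) \<in> poly_fun"
| pf_var: "(\<lambda>N. N$r$s) \<in> poly_fun"
| pf_add: "f \<in> poly_fun \<Longrightarrow> g \<in> poly_fun \<Longrightarrow> (\<lambda>N. f N + g N) \<in> poly_fun"
| pf_mult: "f \<in> poly_fun \<Longrightarrow> g \<in> poly_fun \<Longrightarrow> (\<lambda>N. f N * g N) \<in> poly_fun"

definition zclosed :: "(mat36) set \<Rightarrow> bool" where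
  "zclosed Z \<longleftrightarrow> (\<exists>F\<subseteq>poly_fun. Z = {N. \<forall>f\<in>F. f N = 0})"

definition zclosure :: "(mat36) set \<Rightarrow> (mat36) set" where
  "zclosure S = \<Inter>{Z. zclosed Z \<and> S \<subseteq> Z}"

definition zirreducible :: "(mat36) set \<Rightarrow> bool" where
  "zirreducible Z \<longleftrightarrow> zclosed Z \<and> Z \<noteq> {} \<and>
     (\<forall>Z1 Z2. zclosed Z1 \<and> zclosed Z2 \<and> Z \<subseteq> Z1 \<union> Z2 \<longrightarrow> Z \<subseteq> Z1 \<or> Z \<subseteq> Z2)"

definition alg_dim :: "(mat36) set \<Rightarrow> enat" where
  "alg_dim S = (SUP l\<in>{l::nat. \<exists>Z::nat \<Rightarrow> (mat36) set.
       (\<forall>i\<le>l. zirreducible (Z i) \<and> Z i \<subseteq> zclosure S) \<and> (\<forall>i<l. Z i \<subset> Z (Suc i))}. enat l)"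

end

theory Submission
  imports Defs "HOL-Computational_Algebra.Polynomial"
begin


lemma Delta_expl: "Delta N p q r =
  N$1$p * N$2$q * N$3$r - N$1$p * N$2$r * N$3$q - N$1$q * N$2$p * N$3$r
  + N$1$q * N$2$r * N$3$p + N$1$r * N$2$p * N$3$q - N$1$r * N$2$q * N$3$p"
  unfolding Delta_def det_3 by simp

lemma Delta_swap12: "Delta N q p r = - Delta N p q r"
  unfolding Delta_expl by algebra
lemma Delta_swap23: "Delta N p r q = - Delta N p q r"
  unfolding Delta_expl by algebra

lemma Delta_sort:
  fixes p q r :: 6
  assumes "p \<noteq> q" "q \<noteq> r" "p \<noteq> r"
  shows "\<exists>a b c. a < b \<and> b < c \<and> {a,b,c} = {p,q,r} \<and>
     (Delta N p q r = Delta N a b c \<or> Delta N p q r = - Delta N a b c)"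
proof -
  have s1: "Delta N q p r = - Delta N p q r" "Delta N p r q = - Delta N p q r"
     "Delta N r q p = - Delta N p q r"
    unfolding Delta_expl by algebra+
  have s2: "Delta N q r p = Delta N p q r" "Delta N r p q = Delta N p q r"
    unfolding Delta_expl by algebra+
  consider "p<q" "q<r" | "p<r" "r<q" | "q<p" "p<r" | "q<r" "r<p" | "r<p" "p<q" | "r<q" "q<p"
    using assms by (meson linorder_neqE)
  then show ?thesis
  proof cases
    case 1 then show ?thesis by blast
  next
    case 2 then show ?thesis using s1 by (intro exI[of _ p] exI[of _ r] exI[of _ q]) auto
  next
    case 3 then show ?thesis using s1 by (intro exI[of _ q] exI[of _ p] exI[of _ r]) auto
  next
    case 4 then show ?thesis using s2 by (intro exI[of _ q] exI[of _ r] exI[of _ p]) auto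
  next
    case 5 then show ?thesis using s2 by (intro exI[of _ r] exI[of _ p] exI[of _ q]) auto
  next
    case 6 then show ?thesis using s1 by (intro exI[of _ r] exI[of _ q] exI[of _ p]) auto
  qed
qed

lemma sum6_3:
  fixes f :: "6 \<Rightarrow> complex"
  assumes "p \<noteq> q" "q \<noteq> r" "p \<noteq> r" "\<And>m. m \<notin> {p,q,r} \<Longrightarrow> f m = 0"
  shows "sum f UNIV = f p + f q + f r"
proof -
  have "sum f UNIV = sum f {p,q,r}"
    by (rule sum.mono_neutral_left[symmetric]) (use assms in auto)
  also have "\<dots> = f p + f q + f r" using assms by (simp add: add.assoc)
  finally show ?thesis .
qed

lemma Rel3:
  assumes D: "Delta N p q r \<noteq> 0" and d: "p \<noteq> q" "q \<noteq> r" "p \<noteq> r"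
    and rel: "\<forall>k. (\<Sum>m\<in>UNIV. y m * N$k$m) = 0"
    and z: "\<And>m. m \<notin> {p,q,r} \<Longrightarrow> y m = 0"
  shows "y p = 0 \<and> y q = 0 \<and> y r = 0"
proof -
  have e: "y p * N$k$p + y q * N$k$q + y r * N$k$r = 0" for k
    using rel[rule_format, of k] sum6_3[OF d, of "\<lambda>m. y m * N$k$m"] z by auto
  note e1 = e[of 1] and e2 = e[of 2] and e3 = e[of 3]
  have "y p * Delta N p q r = 0" "y q * Delta N p q r = 0" "y r * Delta N p q r = 0"
    unfolding Delta_expl using e1 e2 e3 by algebra+
  then show ?thesis using D by simp
qed

lemma Orth3:
  assumes D: "Delta N p q r \<noteq> 0"
    and o: "(\<Sum>k\<in>UNIV. c$k * N$k$p) = 0" "(\<Sum>k\<in>UNIV. c$k * N$k$q) = 0"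
       "(\<Sum>k\<in>UNIV. c$k * N$k$r) = 0"
  shows "c = 0"
proof -
  note o' = o[unfolded sum_3]
  have "c$1 * Delta N p q r = 0" "c$2 * Delta N p q r = 0" "c$3 * Delta N p q r = 0"
    unfolding Delta_expl using o' by algebra+
  then show ?thesis using D by (simp add: vec_eq_iff forall_3)
qed


lemma avoid3: "\<exists>r::6. r \<noteq> i \<and> r \<noteq> j \<and> r \<noteq> k"
proof (rule ccontr)
  assume "\<not> ?thesis"
  then have "UNIV \<subseteq> {i,j,k}" by auto
  then have "card (UNIV::6 set) \<le> card {i,j,k}" by (intro card_mono) auto
  also have "\<dots> \<le> 3" by (simp add: card_insert_if)
  finally show False by simp
qed

lemma qf_QN: "qf (QN N k) x = (\<Sum>m\<in>UNIV. (x$m)^2 * N$k$m)"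
proof -
  have "(\<Sum>j\<in>UNIV. QN N k $ i $ j * x $ i * x $ j) = (x$i)^2 * N$k$i" for i
  proof -
    have "(\<Sum>j\<in>UNIV. QN N k $ i $ j * x $ i * x $ j) = (\<Sum>j\<in>UNIV. if j = i then (x$i)^2 * N$k$i else 0)"
      by (rule sum.cong) (auto simp: QN_def power2_eq_square)
    then show ?thesis by simp
  qed
  then show ?thesis unfolding qf_def by simp
qed

lemma grad_QN: "grad (QN N k) x $ i = 2 * N$k$i * x$i"
proof -
  have "(\<Sum>j\<in>UNIV. (QN N k $ i $ j + QN N k $ j $ i) * x $ j) = (\<Sum>j\<in>UNIV. if j = i then 2 * N$k$i * x$i else 0)"
    by (rule sum.cong) (auto simp: QN_def)
  then show ?thesis unfolding grad_def by simp
qed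

lemma jac_rel_QN: "c \<in> jac_rel (QN N) x \<longleftrightarrow> (\<forall>i. (\<Sum>k\<in>UNIV. c$k * N$k$i) * x$i = 0)"
proof -
  have "(\<Sum>k\<in>UNIV. c$k * grad (QN N k) x $ i) = 2 * ((\<Sum>k\<in>UNIV. c$k * N$k$i) * x$i)" for i
    unfolding grad_QN sum_distrib_right sum_distrib_left by (simp add: algebra_simps)
  then show ?thesis unfolding jac_rel_def by simp
qed


lemma Delta_nz_To:
  assumes "N \<in> T_o" "p \<noteq> q" "q \<noteq> r" "p \<noteq> r"
  shows "Delta N p q r \<noteq> 0"
proof -
  obtain a b c where "a < b" "b < c" "Delta N p q r = Delta N a b c \<or> Delta N p q r = - Delta N a b c"
    using Delta_sort[OF assms(2-4), of N] by blast
  moreover have "Delta N a b c \<noteq> 0" using assms(1) \<open>a<b\<close> \<open>b<c\<close> unfolding T_o_def by auto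
  ultimately show ?thesis by auto
qed

lemma part1:
  assumes N: "N \<in> T_o"
  shows "smooth_ci (QN N)"
  unfolding smooth_ci_def
proof
  fix x assume x: "x \<in> cone_pts (QN N)"
  then have x0: "x \<noteq> 0" and rel0: "\<And>k. (\<Sum>m\<in>UNIV. (x$m)^2 * N$k$m) = 0"
    unfolding cone_pts_def qf_QN by auto
  have "c = 0" if c: "c \<in> jac_rel (QN N) x" for c
  proof (rule ccontr)
    assume c0: "c \<noteq> 0"
    define h where "h m = (\<Sum>k\<in>UNIV. c$k * N$k$m)" for m
    have hx: "h m * x$m = 0" for m using c unfolding jac_rel_QN h_def by auto
    have no3: "\<not> (h p = 0 \<and> h q = 0 \<and> h r = 0)" if "p \<noteq> q" "q \<noteq> r" "p \<noteq> r" for p q r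
      using Orth3[OF Delta_nz_To[OF N that]] c0 unfolding h_def by blast
    obtain i where xi: "x$i \<noteq> 0" using x0 by (metis vec_eq_iff zero_index)
    have hi: "h i = 0" using hx[of i] xi by simp
    have "\<exists>j. j \<noteq> i \<and> (\<forall>m. m \<noteq> i \<and> m \<noteq> j \<longrightarrow> x$m = 0)"
    proof (cases "\<exists>j. j \<noteq> i \<and> x$j \<noteq> 0")
      case True
      then obtain j where j: "j \<noteq> i" "x$j \<noteq> 0" by blast
      have hj: "h j = 0" using hx[of j] j by simp
      have "x$m = 0" if "m \<noteq> i" "m \<noteq> j" for m
      proof (rule ccontr)
        assume "x$m \<noteq> 0"
        then have "h m = 0" using hx[of m] by simp
        then show False using no3[of i j m] hi hj j that by auto
      qed
      then show ?thesis using j by blast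
    next
      case False
      obtain j where "j \<noteq> i" using avoid3[of i i i] by blast
      then show ?thesis using False by blast
    qed
    then obtain j where j: "j \<noteq> i" "\<And>m. m \<noteq> i \<Longrightarrow> m \<noteq> j \<Longrightarrow> x$m = 0" by blast
    obtain r where r: "r \<noteq> i" "r \<noteq> j" using avoid3[of i j j] by blast
    have "(x$i)^2 = 0"
      using Rel3[OF Delta_nz_To[OF N, of i j r], of "\<lambda>m. (x$m)^2"] j r rel0 by auto
    then show False using xi by simp
  qed
  moreover have "0 \<in> jac_rel (QN N) x" unfolding jac_rel_QN by simp
  ultimately show "smooth_at (QN N) x" unfolding smooth_at_def by blast
qed


lemma supp_contra:
  fixes x :: "complex^6" and h :: "6 \<Rightarrow> complex"
  assumes hx: "\<And>m. h m * x$m = 0"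
    and rel0: "\<And>k. (\<Sum>m\<in>UNIV. (x$m)^2 * N$k$m) = 0"
    and xi: "x$i \<noteq> 0"
    and no3: "\<And>p q. p \<noteq> i \<Longrightarrow> q \<noteq> i \<Longrightarrow> p \<noteq> q \<Longrightarrow> \<not> (h p = 0 \<and> h q = 0)"
    and D: "\<And>p q. p \<noteq> i \<Longrightarrow> q \<noteq> i \<Longrightarrow> p \<noteq> q \<Longrightarrow> Delta N i p q \<noteq> 0"
  shows False
proof -
  have "\<exists>j. j \<noteq> i \<and> (\<forall>m. m \<noteq> i \<and> m \<noteq> j \<longrightarrow> x$m = 0)"
  proof (cases "\<exists>j. j \<noteq> i \<and> x$j \<noteq> 0")
    case True
    then obtain j where j: "j \<noteq> i" "x$j \<noteq> 0" by blast
    have hj: "h j = 0" using hx[of j] j by simp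
    have "x$m = 0" if "m \<noteq> i" "m \<noteq> j" for m
    proof (rule ccontr)
      assume "x$m \<noteq> 0"
      then have "h m = 0" using hx[of m] by simp
      then show False using no3[of j m] hj j that by auto
    qed
    then show ?thesis using j by blast
  next
    case False
    obtain j where "j \<noteq> i" using avoid3[of i i i] by blast
    then show ?thesis using False by blast
  qed
  then obtain j where j: "j \<noteq> i" "\<And>m. m \<noteq> i \<Longrightarrow> m \<noteq> j \<Longrightarrow> x$m = 0" by blast
  obtain r where r: "r \<noteq> i" "r \<noteq> j" using avoid3[of i j j] by blast
  have "(x$i)^2 = 0"
    using Rel3[OF D[of j r], of "\<lambda>m. (x$m)^2"] j r rel0 by auto
  then show False using xi by simp
qed

lemma Delta_nz_Tijk:
  assumes "N \<in> T_o_ijk i j k" "i < j" "j < k" "p \<noteq> q" "q \<noteq> r" "p \<noteq> r"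
    "{p,q,r} \<noteq> {i,j,k}"
  shows "Delta N p q r \<noteq> 0"
proof -
  obtain a b c where abc: "a < b" "b < c" "{a,b,c} = {p,q,r}"
      "Delta N p q r = Delta N a b c \<or> Delta N p q r = - Delta N a b c"
    using Delta_sort[OF assms(4-6), of N] by blast
  have "(a,b,c) \<noteq> (i,j,k)" using abc(3) assms(7) by auto
  then have "Delta N a b c \<noteq> 0" using assms(1) abc(1,2) unfolding T_o_ijk_def by auto
  then show ?thesis using abc(4) by auto
qed


lemma bqf_diag:
  assumes "\<And>a b. H$a$b = (if a = b then h a else 0)"
  shows "bqf H v w = (\<Sum>a\<in>UNIV. 2 * h a * v$a * w$a)"
proof -
  have "(\<Sum>b\<in>UNIV. H$a$b * (v$a * w$b + w$a * v$b)) = (\<Sum>b\<in>UNIV. if b = a then 2 * h a * v$a * w$a else 0)" for a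
    by (rule sum.cong) (auto simp: assms algebra_simps)
  then show ?thesis unfolding bqf_def by simp
qed

lemma part2:
  assumes ijk: "i < j" "j < k" and N: "N \<in> T_o_ijk i j k"
    and xs: "x \<in> sing_pts (QN N)"
  shows "node_at (QN N) x"
proof -
  have ij: "i \<noteq> j" "j \<noteq> k" "i \<noteq> k" using ijk by auto
  have D: "Delta N p q r \<noteq> 0" if "p \<noteq> q" "q \<noteq> r" "p \<noteq> r" "{p,q,r} \<noteq> {i,j,k}" for p q r
    using Delta_nz_Tijk[OF N ijk that] .
  have xc: "x \<in> cone_pts (QN N)" using xs unfolding sing_pts_def by auto
  then have x0: "x \<noteq> 0" and rel0: "\<And>k. (\<Sum>m\<in>UNIV. (x$m)^2 * N$k$m) = 0"
    unfolding cone_pts_def qf_QN by auto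
  have "\<not> smooth_at (QN N) x" using xs unfolding sing_pts_def by auto
  moreover have "0 \<in> jac_rel (QN N) x" unfolding jac_rel_QN by simp
  ultimately obtain c where c: "c \<in> jac_rel (QN N) x" "c \<noteq> 0"
    unfolding smooth_at_def by blast
  define h where "h m = (\<Sum>k\<in>UNIV. c$k * N$k$m)" for m
  have hx: "h m * x$m = 0" for m using c unfolding jac_rel_QN h_def by auto
  have no3: "\<not> (h p = 0 \<and> h q = 0 \<and> h r = 0)"
    if "p \<noteq> q" "q \<noteq> r" "p \<noteq> r" "{p,q,r} \<noteq> {i,j,k}" for p q r
    using Orth3[OF D[OF that]] c(2) unfolding h_def by blast
  have xout: "x$m = 0" if m: "m \<notin> {i,j,k}" for m
  proof (rule ccontr)
    assume xm: "x$m \<noteq> 0"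
    have hm: "h m = 0" using hx[of m] xm by simp
    show False
    proof (rule supp_contra[OF hx rel0 xm])
      fix p q assume pq: "p \<noteq> m" "q \<noteq> m" "p \<noteq> q"
      have "{m,p,q} \<noteq> {i,j,k}" using m by auto
      then show "\<not> (h p = 0 \<and> h q = 0)" using no3[of m p q] pq hm by auto
      show "Delta N m p q \<noteq> 0" using D[of m p q] pq m by auto
    qed
  qed
  obtain r0 where r0: "r0 \<notin> {i,j,k}" using avoid3[of i j k] by auto
  have xin: "x$u \<noteq> 0" if u: "{u,v,w} = {i,j,k}" "u \<noteq> v" "v \<noteq> w" "u \<noteq> w" for u v w
  proof
    assume xu: "x$u = 0"
    have z: "(x$m)^2 = 0" if "m \<notin> {r0,v,w}" for m
      using xout[of m] xu that u(1) by (cases "m = u") auto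
    have "{r0,v,w} \<noteq> {i,j,k}" using r0 by auto
    moreover have "r0 \<noteq> v" "r0 \<noteq> w" using r0 u(1) by auto
    ultimately have "(x$v)^2 = 0 \<and> (x$w)^2 = 0"
      using Rel3[OF D[of r0 v w], of "\<lambda>m. (x$m)^2"] rel0 z u by auto
    have "x$m = 0" for m
    proof (cases "m \<in> {i,j,k}")
      case True
      then have "m \<in> {u,v,w}" using u(1) by simp
      then show ?thesis using xu \<open>(x$v)^2 = 0 \<and> (x$w)^2 = 0\<close> by auto
    next
      case False then show ?thesis using xout by blast
    qed
    then have "x = 0" by (simp add: vec_eq_iff)
    then show False using x0 by simp
  qed
  have xi: "x$i \<noteq> 0" using xin[of i j k] ij by auto
  have xj: "x$j \<noteq> 0" using xin[of j i k] ij by auto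
  have xk: "x$k \<noteq> 0" using xin[of k i j] ij by auto
  have hA: "h i = 0" "h j = 0" "h k = 0" using hx xi xj xk by (metis mult_eq_0_iff)+
  have hout: "h r \<noteq> 0" if r: "r \<notin> {i,j,k}" for r
  proof
    assume "h r = 0"
    moreover have "{i,j,r} \<noteq> {i,j,k}" using r by auto
    ultimately show False using no3[of i j r] hA r ij by auto
  qed
  define H where "H = (\<chi> a b. \<Sum>k\<in>UNIV. c$k * QN N k $ a $ b)"
  have Hd: "H$a$b = (if a = b then h a else 0)" for a b
    unfolding H_def h_def QN_def by auto
  define W where "W = {v. \<forall>k. (\<Sum>i\<in>UNIV. grad (QN N k) x $ i * v $ i) = 0}"
  have jr: "\<exists>t. d = t *s c" if d: "d \<in> jac_rel (QN N) x" for d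
  proof -
    define hd where "hd m = (\<Sum>k\<in>UNIV. d$k * N$k$m)" for m
    have hdx: "hd m * x$m = 0" for m using d unfolding jac_rel_QN hd_def by auto
    have hdA: "hd i = 0" "hd j = 0" using hdx xi xj by (metis mult_eq_0_iff)+
    define t where "t = hd r0 / h r0"
    define e where "e = d - t *s c"
    have he: "(\<Sum>k\<in>UNIV. e$k * N$k$m) = hd m - t * h m" for m
      unfolding e_def hd_def h_def by (simp add: algebra_simps sum_subtractf sum_distrib_left)
    have "{i,j,r0} \<noteq> {i,j,k}" using r0 by auto
    moreover have "i \<noteq> r0" "j \<noteq> r0" using r0 by auto
    ultimately have "Delta N i j r0 \<noteq> 0" using D ij by auto
    moreover have "(\<Sum>k\<in>UNIV. e$k * N$k$i) = 0" "(\<Sum>k\<in>UNIV. e$k * N$k$j) = 0"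
      "(\<Sum>k\<in>UNIV. e$k * N$k$r0) = 0"
      using he hdA hA hout[OF r0] unfolding t_def by auto
    ultimately have "e = 0" by (rule Orth3)
    then show ?thesis unfolding e_def by auto
  qed
  have rad: "\<exists>t. v = t *s x" if v: "v \<in> W" and vw: "\<forall>w\<in>W. bqf H v w = 0" for v
  proof -
    have vW: "(\<Sum>m\<in>UNIV. x$m * v$m * N$k$m) = 0" for k
    proof -
      have "(\<Sum>m\<in>UNIV. grad (QN N k) x $ m * v $ m) = 2 * (\<Sum>m\<in>UNIV. x$m * v$m * N$k$m)"
        unfolding grad_QN sum_distrib_left by (simp add: algebra_simps)
      then show ?thesis using v unfolding W_def by auto
    qed
    have vout: "v$m = 0" if m: "m \<notin> {i,j,k}" for m
    proof -
      have "axis m 1 \<in> W"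
      proof -
        have "(\<Sum>n\<in>UNIV. grad (QN N kk) x $ n * axis m 1 $ n) = grad (QN N kk) x $ m" for kk
          by (simp add: axis_def if_distrib[of "\<lambda>z. _ * z"] cong: if_cong)
        then show ?thesis unfolding W_def using xout[OF m] grad_QN by auto
      qed
      then have "bqf H v (axis m 1) = 0" using vw by auto
      moreover have "bqf H v (axis m 1) = 2 * h m * v$m"
        unfolding bqf_diag[OF Hd] by (simp add: axis_def if_distrib[of "\<lambda>z. _ * z"] cong: if_cong)
      ultimately show ?thesis using hout[OF m] by simp
    qed
    define t where "t = v$k / x$k"
    define y where "y m = x$m * v$m - t * (x$m)^2" for m
    have yrel: "\<forall>kk. (\<Sum>m\<in>UNIV. y m * N$kk$m) = 0"
    proof
      fix kk
      have "(\<Sum>m\<in>UNIV. y m * N$kk$m) = (\<Sum>m\<in>UNIV. x$m * v$m * N$kk$m) - t * (\<Sum>m\<in>UNIV. (x$m)^2 * N$kk$m)"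
        unfolding y_def by (simp add: algebra_simps sum_subtractf sum_distrib_left)
      then show "(\<Sum>m\<in>UNIV. y m * N$kk$m) = 0" using vW rel0 by simp
    qed
    have yk: "y k = 0" unfolding y_def t_def using xk by (simp add: power2_eq_square)
    have yz: "y m = 0" if "m \<notin> {i,j,r0}" for m
      using that yk xout[of m] unfolding y_def by (cases "m = k") auto
    have "{i,j,r0} \<noteq> {i,j,k}" using r0 by auto
    moreover have "i \<noteq> r0" "j \<noteq> r0" using r0 by auto
    ultimately have "Delta N i j r0 \<noteq> 0" using D ij by auto
    then have "y i = 0 \<and> y j = 0" using Rel3[OF _ _ _ _ yrel yz] ij \<open>i \<noteq> r0\<close> \<open>j \<noteq> r0\<close> by blast
    then have "v$m = t * x$m" for m
    proof -
      assume yy: "y i = 0 \<and> y j = 0"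
      have yfac: "y n = x$n * (v$n - t * x$n)" for n unfolding y_def by (simp add: power2_eq_square algebra_simps)
      have key: "v$n = t * x$n" if "y n = 0" "x$n \<noteq> 0" for n
        using that yfac[of n] by simp
      show ?thesis
      proof (cases "m \<in> {i,j,k}")
        case True
        then show ?thesis using key[of i] key[of j] key[of k] yy yk xi xj xk by auto
      next
        case False
        then show ?thesis using xout[OF False] vout[OF False] by simp
      qed
    qed
    then show ?thesis by (auto simp: vec_eq_iff)
  qed
  have "c \<noteq> 0 \<and> c \<in> jac_rel (QN N) x \<and> (\<forall>d\<in>jac_rel (QN N) x. \<exists>t. d = t *s c) \<and>
     (\<forall>v\<in>W. (\<forall>w\<in>W. bqf H v w = 0) \<longrightarrow> (\<exists>t. v = t *s x))"
    using c jr rad by blast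
  then show ?thesis
    unfolding node_at_def Let_def
    apply (intro conjI[OF xc] exI[of _ c])
    unfolding H_def W_def by simp
qed


definition pcurve :: "(complex \<Rightarrow> mat36) \<Rightarrow> bool" where
  "pcurve \<gamma> \<longleftrightarrow> (\<forall>r s. \<exists>p. \<forall>t. \<gamma> t $ r $ s = poly p t)"

lemma poly_fun_curve:
  assumes "f \<in> poly_fun" "pcurve \<gamma>"
  shows "\<exists>p. \<forall>t. f (\<gamma> t) = poly p t"
  using assms(1)
proof induction
  case (pf_const c) then show ?case by (intro exI[of _ "[:c:]"]) simp
next
  case (pf_var r s) then show ?case using assms(2) unfolding pcurve_def by blast
next
  case (pf_add f g)
  then obtain p q where "\<forall>t. f (\<gamma> t) = poly p t" "\<forall>t. g (\<gamma> t) = poly q t" by blast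
  then show ?case by (intro exI[of _ "p + q"]) simp
next
  case (pf_mult f g)
  then obtain p q where "\<forall>t. f (\<gamma> t) = poly p t" "\<forall>t. g (\<gamma> t) = poly q t" by blast
  then show ?case by (intro exI[of _ "p * q"]) simp
qed

definition curve_conn :: "mat36 set \<Rightarrow> bool" where
  "curve_conn S \<longleftrightarrow> (\<forall>P1\<in>S. \<forall>P2\<in>S. \<exists>\<gamma>. pcurve \<gamma> \<and> \<gamma> 0 = P1 \<and> \<gamma> 1 = P2 \<and> (\<forall>t. \<gamma> t \<in> S))"

lemma curve_conn_irred:
  assumes cc: "curve_conn S" and Z1: "zclosed Z1" and Z2: "zclosed Z2" and sub: "S \<subseteq> Z1 \<union> Z2"
  shows "S \<subseteq> Z1 \<or> S \<subseteq> Z2"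
proof (rule ccontr)
  assume "\<not> ?thesis"
  then obtain P1 P2 where P: "P1 \<in> S" "P1 \<notin> Z1" "P2 \<in> S" "P2 \<notin> Z2" by blast
  obtain F1 where F1: "F1 \<subseteq> poly_fun" "Z1 = {N. \<forall>f\<in>F1. f N = 0}" using Z1 unfolding zclosed_def by blast
  obtain F2 where F2: "F2 \<subseteq> poly_fun" "Z2 = {N. \<forall>f\<in>F2. f N = 0}" using Z2 unfolding zclosed_def by blast
  obtain f1 where f1: "f1 \<in> F1" "f1 P1 \<noteq> 0" using P F1 by blast
  obtain f2 where f2: "f2 \<in> F2" "f2 P2 \<noteq> 0" using P F2 by blast
  obtain \<gamma> where g: "pcurve \<gamma>" "\<gamma> 0 = P1" "\<gamma> 1 = P2" "\<And>t. \<gamma> t \<in> S"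
    using cc P unfolding curve_conn_def by blast
  obtain p1 where p1: "\<forall>t. f1 (\<gamma> t) = poly p1 t" using poly_fun_curve[OF _ g(1), of f1] f1 F1 by blast
  obtain p2 where p2: "\<forall>t. f2 (\<gamma> t) = poly p2 t" using poly_fun_curve[OF _ g(1), of f2] f2 F2 by blast
  have "poly (p1 * p2) t = 0" for t
  proof -
    have "\<gamma> t \<in> Z1 \<union> Z2" using g(4) sub by blast
    then have "f1 (\<gamma> t) = 0 \<or> f2 (\<gamma> t) = 0" using F1 F2 f1 f2 by blast
    then show ?thesis using p1 p2 by auto
  qed
  then have "p1 * p2 = 0" using poly_all_0_iff_0 by blast
  moreover have "p1 \<noteq> 0" using p1 f1 g(2) by (metis poly_0)
  moreover have "p2 \<noteq> 0" using p2 f2 g(3) by (metis poly_0)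
  ultimately show False by simp
qed

lemma pf_neg: assumes "f \<in> poly_fun" shows "(\<lambda>N. - f N) \<in> poly_fun"
proof -
  have "(\<lambda>N. (-1) * f N) \<in> poly_fun" by (rule pf_mult[OF pf_const assms])
  then show ?thesis by simp
qed
lemma pf_sub: assumes "f \<in> poly_fun" "g \<in> poly_fun" shows "(\<lambda>N. f N - g N) \<in> poly_fun"
proof -
  have "(\<lambda>N. f N + - g N) \<in> poly_fun" by (rule pf_add[OF assms(1) pf_neg[OF assms(2)]])
  then show ?thesis by simp
qed

lemma pf_mon: "(\<lambda>N. N$a$b * N$c$d * N$e$f) \<in> poly_fun"
  by (rule pf_mult[OF pf_mult[OF pf_var pf_var] pf_var])

lemma pf_Delta: "(\<lambda>N. Delta N p q r) \<in> poly_fun"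
  unfolding Delta_expl
  by (rule pf_sub[OF pf_add[OF pf_add[OF pf_sub[OF pf_sub[OF pf_mon pf_mon] pf_mon] pf_mon] pf_mon] pf_mon])

lemma zclosed_V: "f \<in> poly_fun \<Longrightarrow> zclosed {N. f N = 0}"
  unfolding zclosed_def by (intro exI[of _ "{f}"]) auto

lemma zclosed_UNIV: "zclosed UNIV"
  unfolding zclosed_def by (intro exI[of _ "{}"]) auto

lemma zclosed_empty: "zclosed {}"
  unfolding zclosed_def by (rule exI[of _ "{\<lambda>_. 1}"]) (simp add: pf_const)


lemma zclosed_Int: assumes "zclosed A" "zclosed B" shows "zclosed (A \<inter> B)"
proof -
  obtain F where F: "F \<subseteq> poly_fun" "A = {N. \<forall>f\<in>F. f N = 0}" using assms(1) unfolding zclosed_def by blast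
  obtain G where G: "G \<subseteq> poly_fun" "B = {N. \<forall>f\<in>G. f N = 0}" using assms(2) unfolding zclosed_def by blast
  have "A \<inter> B = {N. \<forall>f\<in>F \<union> G. f N = 0}" unfolding F(2) G(2) by blast
  moreover have "F \<union> G \<subseteq> poly_fun" using F G by blast
  ultimately show ?thesis unfolding zclosed_def by blast
qed


lemma zclosed_Un: assumes "zclosed A" "zclosed B" shows "zclosed (A \<union> B)"
proof -
  obtain F where F: "F \<subseteq> poly_fun" "A = {N. \<forall>f\<in>F. f N = 0}" using assms(1) unfolding zclosed_def by blast
  obtain G where G: "G \<subseteq> poly_fun" "B = {N. \<forall>f\<in>G. f N = 0}" using assms(2) unfolding zclosed_def by blast
  define H where "H = (\<lambda>(f,g). (\<lambda>N. f N * g N)) ` (F \<times> G)"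
  have Hp: "H \<subseteq> poly_fun"
  proof
    fix h assume "h \<in> H"
    then obtain f g where "f \<in> F" "g \<in> G" "h = (\<lambda>N. f N * g N)" unfolding H_def by auto
    then show "h \<in> poly_fun" using F(1) G(1) by (auto intro: pf_mult)
  qed
  have "A \<union> B = {N. \<forall>h\<in>H. h N = 0}"
  proof (rule set_eqI, rule iffI)
    fix N assume "N \<in> A \<union> B"
    then have "(\<forall>f\<in>F. f N = 0) \<or> (\<forall>g\<in>G. g N = 0)" unfolding F(2) G(2) by blast
    then have "h N = 0" if "h \<in> H" for h
    proof -
      from that obtain f g where "f \<in> F" "g \<in> G" "h = (\<lambda>N. f N * g N)" unfolding H_def by auto
      then show ?thesis using \<open>(\<forall>f\<in>F. f N = 0) \<or> (\<forall>g\<in>G. g N = 0)\<close> by auto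
    qed
    then show "N \<in> {N. \<forall>h\<in>H. h N = 0}" by simp
  next
    fix N assume N: "N \<in> {N. \<forall>h\<in>H. h N = 0}"
    show "N \<in> A \<union> B"
    proof (rule ccontr)
      assume "N \<notin> A \<union> B"
      then obtain f g where fg: "f \<in> F" "f N \<noteq> 0" "g \<in> G" "g N \<noteq> 0" unfolding F(2) G(2) by blast
      have mem: "(\<lambda>N. f N * g N) \<in> H" unfolding H_def by (rule image_eqI[where x="(f,g)"]) (simp_all add: fg)
      have all: "\<forall>h\<in>H. h N = 0" using N by simp
      have "(\<lambda>N. f N * g N) N = 0" using all mem by (rule bspec)
      then have "f N * g N = 0" by simp
      then show False using fg by simp
    qed
  qed
  then show ?thesis using Hp unfolding zclosed_def by blast
qed


lemma zclosed_UN: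
  assumes "finite I" "\<And>i. i \<in> I \<Longrightarrow> zclosed (C i)"
  shows "zclosed (\<Union>i\<in>I. C i)"
  using assms
proof (induction I rule: finite_induct)
  case empty show ?case by (simp only: image_empty Union_empty zclosed_empty)
next
  case (insert x F)
  have a: "zclosed (C x)" by (rule insert.prems) simp
  have b: "zclosed (\<Union>i\<in>F. C i)" by (rule insert.IH, rule insert.prems) simp
  have "(\<Union>i\<in>insert x F. C i) = C x \<union> (\<Union>i\<in>F. C i)" by simp
  then show ?case using zclosed_Un[OF a b] by simp
qed


lemma irred_UN:
  assumes Z: "zirreducible Z" and "finite I" "\<And>i. i \<in> I \<Longrightarrow> zclosed (C i)"
    and "Z \<subseteq> (\<Union>i\<in>I. C i)"
  shows "\<exists>i\<in>I. Z \<subseteq> C i"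
  using assms(2-4)
proof (induction I rule: finite_induct)
  case empty then show ?case using Z unfolding zirreducible_def by simp
next
  case (insert x F)
  have s: "Z \<subseteq> C x \<union> (\<Union>i\<in>F. C i)" using insert.prems by simp
  have c1: "zclosed (C x)" using insert.prems by simp
  have c2: "zclosed (\<Union>i\<in>F. C i)" using insert.prems insert.hyps by (intro zclosed_UN) auto
  have "\<forall>Z1 Z2. zclosed Z1 \<and> zclosed Z2 \<and> Z \<subseteq> Z1 \<union> Z2 \<longrightarrow> Z \<subseteq> Z1 \<or> Z \<subseteq> Z2"
    using Z unfolding zirreducible_def by simp
  then have "Z \<subseteq> C x \<or> Z \<subseteq> (\<Union>i\<in>F. C i)" using s c1 c2 by simp
  then show ?case
  proof
    assume "Z \<subseteq> C x" then show ?case by simp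
  next
    assume "Z \<subseteq> (\<Union>i\<in>F. C i)"
    then have "\<exists>i\<in>F. Z \<subseteq> C i" using insert.IH insert.prems by simp
    then show ?case by simp
  qed
qed


lemma sub_zclosure: "S \<subseteq> zclosure S"
  unfolding zclosure_def by (rule Inter_greatest) simp

lemma zclosure_mono: "S \<subseteq> T \<Longrightarrow> zclosure S \<subseteq> zclosure T"
  unfolding zclosure_def by (rule Inter_anti_mono) auto

lemma zclosure_sub: "zclosed Z \<Longrightarrow> S \<subseteq> Z \<Longrightarrow> zclosure S \<subseteq> Z"
  unfolding zclosure_def by (rule Inter_lower) simp


lemma line_curve: "curve_conn UNIV"
  unfolding curve_conn_def
proof (intro ballI)
  fix P1 P2 :: mat36
  let ?g = "\<lambda>t. (\<chi> r s. P1$r$s + t * (P2$r$s - P1$r$s)) :: mat36"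
  have "pcurve ?g" unfolding pcurve_def
    by (intro allI, rule_tac x="[:P1$r$s, P2$r$s - P1$r$s:]" in exI) (simp add: algebra_simps)
  moreover have "?g 0 = P1" "?g 1 = P2" by (simp_all add: vec_eq_iff)
  ultimately show "\<exists>\<gamma>. pcurve \<gamma> \<and> \<gamma> 0 = P1 \<and> \<gamma> 1 = P2 \<and> (\<forall>t. \<gamma> t \<in> UNIV)"
    by (intro exI[of _ ?g]) simp
qed


lemma irred_UNIV: "zirreducible UNIV"
  unfolding zirreducible_def
proof (intro conjI allI impI zclosed_UNIV)
  show "(UNIV::mat36 set) \<noteq> {}" by simp
  fix Z1 Z2 assume a: "zclosed Z1 \<and> zclosed Z2 \<and> UNIV \<subseteq> Z1 \<union> Z2"
  show "UNIV \<subseteq> Z1 \<or> UNIV \<subseteq> Z2"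
    by (rule curve_conn_irred[OF line_curve]) (use a in \<open>blast+\<close>)
qed


lemma kernel3:
  assumes "Delta N p q r = 0"
  shows "\<exists>x::complex^3. x \<noteq> 0 \<and> (\<forall>\<rho>. x$1 * N$\<rho>$p + x$2 * N$\<rho>$q + x$3 * N$\<rho>$r = 0)"
proof -
  define M where "M = (\<chi> \<rho> s::3. N $ \<rho> $ (if s = 1 then p else if s = 2 then q else r))"
  have "det M = 0" using assms unfolding M_def Delta_def .
  then have "\<not> invertible M" using invertible_det_nz by blast
  then have "\<not> (\<forall>x. M *v x = 0 \<longrightarrow> x = 0)"
    using invertible_left_inverse matrix_left_invertible_ker by blast
  then obtain x where x: "M *v x = 0" "x \<noteq> 0" by blast
  have "x$1 * N$\<rho>$p + x$2 * N$\<rho>$q + x$3 * N$\<rho>$r = 0" for \<rho>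
  proof -
    have "(M *v x) $ \<rho> = 0" using x by simp
    then show ?thesis unfolding matrix_vector_mult_def M_def by (simp add: sum_3 algebra_simps)
  qed
  then show ?thesis using x by blast
qed

lemma solve3: fixes a b c x1 x2 x3 :: complex
  assumes "x1 * a + x2 * b + x3 * c = 0" "x3 \<noteq> 0"
  shows "c = a * (- x1 / x3) + b * (- x2 / x3)"
proof -
  have "x3 * c = - (x1 * a) - x2 * b" using assms(1) by algebra
  then have "c = (- (x1 * a) - x2 * b) / x3" using assms(2) by (simp add: eq_divide_eq mult.commute)
  then show ?thesis by (simp add: diff_divide_distrib mult.commute)
qed

lemma factor_case:
  assumes e: "\<And>\<rho>. N$\<rho>$r = N$\<rho>$p * \<alpha> + N$\<rho>$q * \<beta>" and d: "p \<noteq> q" "q \<noteq> r" "p \<noteq> r"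
  shows "\<exists>(u::3\<Rightarrow>complex) (w::3\<Rightarrow>complex) (b1::6\<Rightarrow>complex) (b2::6\<Rightarrow>complex).
     \<forall>s\<in>{p,q,r}. \<forall>\<rho>. N$\<rho>$s = u \<rho> * b1 s + w \<rho> * b2 s"
proof -
  define b1 where "b1 s = (if s = p then 1 else if s = q then 0 else \<alpha>)" for s :: 6
  define b2 where "b2 s = (if s = p then 0 else if s = q then 1 else \<beta>)" for s :: 6
  have H: "N$\<rho>$s = N$\<rho>$p * b1 s + N$\<rho>$q * b2 s" if sA: "s \<in> {p,q,r}" for s \<rho>
  proof -
    consider "s = p" | "s = q" | "s = r" using sA by blast
    then show ?thesis
    proof cases
      case 1 then show ?thesis unfolding b1_def b2_def by simp
    next
      case 2 then show ?thesis unfolding b1_def b2_def using d by simp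
    next
      case 3 then show ?thesis unfolding b1_def b2_def using d e[of \<rho>] by simp
    qed
  qed
  show ?thesis
    apply (rule exI[of _ "\<lambda>\<rho>. N$\<rho>$p"], rule exI[of _ "\<lambda>\<rho>. N$\<rho>$q"], rule exI[of _ b1], rule exI[of _ b2])
    by (intro ballI allI H)
qed

lemma factor3:
  assumes "Delta N p q r = 0" "p \<noteq> q" "q \<noteq> r" "p \<noteq> r"
  shows "\<exists>(u::3\<Rightarrow>complex) (w::3\<Rightarrow>complex) (b1::6\<Rightarrow>complex) (b2::6\<Rightarrow>complex).
     \<forall>s\<in>{p,q,r}. \<forall>\<rho>. N$\<rho>$s = u \<rho> * b1 s + w \<rho> * b2 s"
proof -
  obtain x :: "complex^3" where x: "x \<noteq> 0" "\<And>\<rho>. x$1 * N$\<rho>$p + x$2 * N$\<rho>$q + x$3 * N$\<rho>$r = 0"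
    using kernel3[OF assms(1)] by blast
  have "x$1 \<noteq> 0 \<or> x$2 \<noteq> 0 \<or> x$3 \<noteq> 0" using x(1) by (auto simp: vec_eq_iff forall_3)
  then consider "x$3 \<noteq> 0" | "x$2 \<noteq> 0" | "x$1 \<noteq> 0" by blast
  then show ?thesis
  proof cases
    case 1
    have "N$\<rho>$r = N$\<rho>$p * (- x$1 / x$3) + N$\<rho>$q * (- x$2 / x$3)" for \<rho>
      by (rule solve3[OF x(2) 1])
    from factor_case[OF this assms(2-4)] show ?thesis .
  next
    case 2
    have "N$\<rho>$q = N$\<rho>$p * (- x$1 / x$2) + N$\<rho>$r * (- x$3 / x$2)" for \<rho>
      by (rule solve3[OF _ 2, of "x$1" _ "x$3"]) (use x(2)[of \<rho>] in \<open>simp add: add_ac\<close>)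
    from factor_case[OF this assms(4) assms(3)[symmetric] assms(2)] show ?thesis
      by (simp add: insert_commute)
  next
    case 3
    have "N$\<rho>$p = N$\<rho>$q * (- x$2 / x$1) + N$\<rho>$r * (- x$3 / x$1)" for \<rho>
      by (rule solve3[OF _ 3, of "x$2" _ "x$3"]) (use x(2)[of \<rho>] in \<open>simp add: add_ac\<close>)
    from factor_case[OF this assms(3) assms(4)[symmetric] assms(2)[symmetric]] show ?thesis
      by (simp add: insert_commute)
  qed
qed


lemma Delta_rank2:
  assumes "\<And>s \<rho>. s \<in> {p,q,r} \<Longrightarrow> N$\<rho>$s = U \<rho> * B1 s + W \<rho> * B2 s"
  shows "Delta N p q r = 0"
proof -
  have e: "N$\<rho>$p = U \<rho> * B1 p + W \<rho> * B2 p" "N$\<rho>$q = U \<rho> * B1 q + W \<rho> * B2 q"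
    "N$\<rho>$r = U \<rho> * B1 r + W \<rho> * B2 r" for \<rho>
    using assms by auto
  show ?thesis unfolding Delta_expl e by algebra
qed

definition lin :: "complex \<Rightarrow> complex \<Rightarrow> complex \<Rightarrow> complex" where
  "lin a b t = a + t * (b - a)"

lemma lin_poly: "lin a b t = poly [:a, b - a:] t"
  unfolding lin_def by simp

lemma VDelta_curve:
  assumes d: "p \<noteq> q" "q \<noteq> r" "p \<noteq> r"
  shows "curve_conn {N. Delta N p q r = 0}"
  unfolding curve_conn_def
proof (intro ballI)
  fix P1 P2 assume P1: "P1 \<in> {N. Delta N p q r = 0}" and P2: "P2 \<in> {N. Delta N p q r = 0}"
  obtain u1 w1 b11 b21 where f1: "\<forall>s\<in>{p,q,r}. \<forall>\<rho>. P1$\<rho>$s = u1 \<rho> * b11 s + w1 \<rho> * b21 s"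
    using factor3[of P1 p q r] P1 d by auto
  obtain u2 w2 b12 b22 where f2: "\<forall>s\<in>{p,q,r}. \<forall>\<rho>. P2$\<rho>$s = u2 \<rho> * b12 s + w2 \<rho> * b22 s"
    using factor3[of P2 p q r] P2 d by auto
  define \<gamma> :: "complex \<Rightarrow> mat36" where "\<gamma> t = (\<chi> \<rho> s. if s \<in> {p,q,r}
      then lin (u1 \<rho>) (u2 \<rho>) t * lin (b11 s) (b12 s) t + lin (w1 \<rho>) (w2 \<rho>) t * lin (b21 s) (b22 s) t
      else lin (P1$\<rho>$s) (P2$\<rho>$s) t)" for t
  have pc: "pcurve \<gamma>" unfolding pcurve_def
  proof (intro allI)
    fix \<rho> s
    show "\<exists>pp. \<forall>t. \<gamma> t $ \<rho> $ s = poly pp t"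
    proof (cases "s \<in> {p,q,r}")
      case True
      show ?thesis
        by (rule exI[of _ "[:u1 \<rho>, u2 \<rho> - u1 \<rho>:] * [:b11 s, b12 s - b11 s:] +
                          [:w1 \<rho>, w2 \<rho> - w1 \<rho>:] * [:b21 s, b22 s - b21 s:]"])
           (simp only: \<gamma>_def vec_lambda_beta if_P[OF True] lin_poly poly_add poly_mult refl simp_thms)
    next
      case False
      show ?thesis
        by (rule exI[of _ "[:P1$\<rho>$s, P2$\<rho>$s - P1$\<rho>$s:]"])
           (simp only: \<gamma>_def vec_lambda_beta if_not_P[OF False] lin_poly refl simp_thms)
    qed
  qed
  have g0: "\<gamma> 0 = P1" unfolding vec_eq_iff
  proof (intro allI)
    fix \<rho> s
    show "\<gamma> 0 $ \<rho> $ s = P1 $ \<rho> $ s"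
    proof (cases "s \<in> {p,q,r}")
      case True
      have "P1$\<rho>$s = u1 \<rho> * b11 s + w1 \<rho> * b21 s" using f1 True by blast
      then show ?thesis using True by (simp add: \<gamma>_def lin_def)
    next
      case False then show ?thesis by (simp add: \<gamma>_def lin_def)
    qed
  qed
  have g1: "\<gamma> 1 = P2" unfolding vec_eq_iff
  proof (intro allI)
    fix \<rho> s
    show "\<gamma> 1 $ \<rho> $ s = P2 $ \<rho> $ s"
    proof (cases "s \<in> {p,q,r}")
      case True
      have "P2$\<rho>$s = u2 \<rho> * b12 s + w2 \<rho> * b22 s" using f2 True by blast
      then show ?thesis using True by (simp add: \<gamma>_def lin_def)
    next
      case False then show ?thesis by (simp add: \<gamma>_def lin_def)
    qed
  qed
  have gin: "\<gamma> t \<in> {N. Delta N p q r = 0}" for t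
  proof -
    have "Delta (\<gamma> t) p q r = 0"
      by (rule Delta_rank2[of _ _ _ _ "\<lambda>\<rho>. lin (u1 \<rho>) (u2 \<rho>) t" "\<lambda>s. lin (b11 s) (b12 s) t"
            "\<lambda>\<rho>. lin (w1 \<rho>) (w2 \<rho>) t" "\<lambda>s. lin (b21 s) (b22 s) t"]) (simp add: \<gamma>_def)
    then show ?thesis by simp
  qed
  show "\<exists>\<gamma>. pcurve \<gamma> \<and> \<gamma> 0 = P1 \<and> \<gamma> 1 = P2 \<and> (\<forall>t. \<gamma> t \<in> {N. Delta N p q r = 0})"
    using pc g0 g1 gin by blast
qed

lemma Delta_zero_mat: "Delta 0 p q r = 0"
  unfolding Delta_expl by simp

lemma irred_VDelta:
  assumes "p \<noteq> q" "q \<noteq> r" "p \<noteq> r"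
  shows "zirreducible {N. Delta N p q r = 0}"
  unfolding zirreducible_def
proof (intro conjI allI impI)
  show "zclosed {N. Delta N p q r = 0}" by (rule zclosed_V[OF pf_Delta])
  show "{N. Delta N p q r = 0} \<noteq> {}" using Delta_zero_mat by blast
  fix Z1 Z2 assume a: "zclosed Z1 \<and> zclosed Z2 \<and> {N. Delta N p q r = 0} \<subseteq> Z1 \<union> Z2"
  show "{N. Delta N p q r = 0} \<subseteq> Z1 \<or> {N. Delta N p q r = 0} \<subseteq> Z2"
    by (rule curve_conn_irred[OF VDelta_curve[OF assms]]) (use a in \<open>blast+\<close>)
qed


definition Emat :: "6 \<Rightarrow> 6 \<Rightarrow> 6 \<Rightarrow> mat36" where
  "Emat a b c = (\<chi> \<rho> s. if (\<rho> = 1 \<and> s = a) \<or> (\<rho> = 2 \<and> s = b) \<or> (\<rho> = 3 \<and> s = c) then 1 else 0)"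

lemma Delta_Emat: "a \<noteq> b \<Longrightarrow> b \<noteq> c \<Longrightarrow> a \<noteq> c \<Longrightarrow> Delta (Emat a b c) a b c = 1"
  unfolding Delta_expl Emat_def by simp

lemma Delta_zero_col:
  assumes "\<And>\<rho>. N$\<rho>$s = 0" "s \<in> {p,q,r}"
  shows "Delta N p q r = 0"
proof -
  from assms(2) consider "s = p" | "s = q" | "s = r" by blast
  then show ?thesis
  proof cases
    case 1 then have "\<And>\<rho>. N$\<rho>$p = 0" using assms(1) by simp
    then show ?thesis by (simp add: Delta_expl)
  next
    case 2 then have "\<And>\<rho>. N$\<rho>$q = 0" using assms(1) by simp
    then show ?thesis by (simp add: Delta_expl)
  next
    case 3 then have "\<And>\<rho>. N$\<rho>$r = 0" using assms(1) by simp
    then show ?thesis by (simp add: Delta_expl)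
  qed
qed

lemma Emat_col: "s \<notin> {a,b,c} \<Longrightarrow> Emat a b c $ \<rho> $ s = 0"
  unfolding Emat_def by auto

lemma rank3_Delta:
  assumes "Delta N p q r \<noteq> 0" shows "rank3 N"
  unfolding rank3_def
proof (intro allI impI)
  fix c :: "complex^3" assume "\<forall>j. (\<Sum>k\<in>UNIV. c$k * N$k$j) = 0"
  then show "c = 0" using Orth3[OF assms, of c] by blast
qed

definition Trip :: "(6 \<times> 6 \<times> 6) set" where "Trip = {(i,j,k). i < j \<and> j < k}"
definition DV :: "6 \<times> 6 \<times> 6 \<Rightarrow> mat36 set" where "DV t = (case t of (i,j,k) \<Rightarrow> {N. Delta N i j k = 0})"

lemma sorted_eq:
  fixes i j k i' j' k' :: 6
  assumes "i<j" "j<k" "i'<j'" "j'<k'" "{i,j,k} \<subseteq> {i',j',k'}"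
  shows "(i,j,k) = (i',j',k')"
  using assms by auto

lemma DV_witness:
  assumes a: "a \<in> Trip" and b: "b \<in> Trip" and ab: "a \<noteq> b"
  shows "\<exists>N. N \<in> DV a \<and> N \<notin> DV b"
proof -
  obtain i j k where a': "a = (i,j,k)" "i < j" "j < k" using a unfolding Trip_def by auto
  obtain i' j' k' where b': "b = (i',j',k')" "i' < j'" "j' < k'" using b unfolding Trip_def by auto
  have "\<not> {i,j,k} \<subseteq> {i',j',k'}" using sorted_eq[OF a'(2,3) b'(2,3)] ab a'(1) b'(1) by blast
  then obtain s where s: "s \<in> {i,j,k}" "s \<notin> {i',j',k'}" by blast
  let ?E = "Emat i' j' k'"
  have "Delta ?E i j k = 0" by (rule Delta_zero_col[OF Emat_col[OF s(2)] s(1)])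
  moreover have "Delta ?E i' j' k' = 1" using b' by (intro Delta_Emat) auto
  ultimately show ?thesis unfolding DV_def a'(1) b'(1) by (intro exI[of _ ?E]) simp
qed

lemma irred_DV: "a \<in> Trip \<Longrightarrow> zirreducible (DV a)"
  unfolding Trip_def DV_def by (auto intro!: irred_VDelta)

lemma closed_DV: "zclosed (DV a)"
  unfolding DV_def by (cases a) (auto intro!: zclosed_V pf_Delta)

definition badset :: "mat36 set" where "badset = {N. rank3 N} - (T_o \<union> D_o_T)"
definition Pairs :: "((6 \<times> 6 \<times> 6) \<times> (6 \<times> 6 \<times> 6)) set" where
  "Pairs = {(a,b). a \<in> Trip \<and> b \<in> Trip \<and> a \<noteq> b}"
definition Ubad :: "mat36 set" where "Ubad = (\<Union>p\<in>Pairs. DV (fst p) \<inter> DV (snd p))"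

lemma closed_Ubad: "zclosed Ubad"
  unfolding Ubad_def by (rule zclosed_UN) (auto intro!: zclosed_Int closed_DV)

lemma bad_sub_U: "badset \<subseteq> Ubad"
proof
  fix N assume N: "N \<in> badset"
  then have r: "rank3 N" and nT: "N \<notin> T_o" and nD: "N \<notin> D_o_T" unfolding badset_def by auto
  obtain i j k where ijk: "i < j" "j < k" "Delta N i j k = 0" using r nT unfolding T_o_def by auto
  have "N \<notin> T_o_ijk i j k" using nD ijk unfolding D_o_T_def by blast
  then obtain l m n where lmn: "l < m" "m < n" "(l,m,n) \<noteq> (i,j,k)" "Delta N l m n = 0"
    using r ijk unfolding T_o_ijk_def by auto
  have "((i,j,k),(l,m,n)) \<in> Pairs" using ijk lmn unfolding Pairs_def Trip_def by auto
  moreover have "N \<in> DV (i,j,k) \<inter> DV (l,m,n)" using ijk lmn unfolding DV_def by simp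
  ultimately show "N \<in> Ubad" unfolding Ubad_def by force
qed

lemma zclosure_rank3: "zclosure {N. rank3 N} = UNIV"
proof -
  have "Z = UNIV" if Z: "zclosed Z" "{N. rank3 N} \<subseteq> Z" for Z
  proof -
    let ?V = "{N. Delta N 0 1 2 = 0}"
    have "UNIV \<subseteq> Z \<union> ?V" using rank3_Delta Z(2) by blast
    then have "UNIV \<subseteq> Z \<or> UNIV \<subseteq> ?V"
      using irred_UNIV Z(1) zclosed_V[OF pf_Delta] unfolding zirreducible_def by blast
    moreover have "Emat 0 1 2 \<notin> ?V" using Delta_Emat[of 0 1 2] by simp
    ultimately show ?thesis by blast
  qed
  then show ?thesis unfolding zclosure_def by auto
qed


definition chainp :: "mat36 set \<Rightarrow> nat \<Rightarrow> (nat \<Rightarrow> mat36 set) \<Rightarrow> bool" where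
  "chainp S l Z \<longleftrightarrow> (\<forall>i\<le>l. zirreducible (Z i) \<and> Z i \<subseteq> zclosure S) \<and> (\<forall>i<l. Z i \<subset> Z (Suc i))"

lemma alg_dim_chainp: "alg_dim S = (SUP l\<in>{l. \<exists>Z. chainp S l Z}. enat l)"
  unfolding alg_dim_def chainp_def by simp

lemma chain_ext:
  assumes ch: "chainp badset l Z"
  shows "\<exists>Z'. chainp {N. rank3 N} (l+2) Z'"
proof -
  have Zl: "zirreducible (Z l)" "Z l \<subseteq> zclosure badset" using ch unfolding chainp_def by auto
  have "zclosure badset \<subseteq> Ubad" by (rule zclosure_sub[OF closed_Ubad bad_sub_U])
  with Zl(2) have "Z l \<subseteq> Ubad" by (rule order_trans)
  then have sub: "Z l \<subseteq> (\<Union>p\<in>Pairs. DV (fst p) \<inter> DV (snd p))" unfolding Ubad_def .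
  have fin: "finite Pairs" by simp
  have cl: "\<And>p. p \<in> Pairs \<Longrightarrow> zclosed (DV (fst p) \<inter> DV (snd p))"
    by (intro zclosed_Int closed_DV)
  have "\<exists>p\<in>Pairs. Z l \<subseteq> DV (fst p) \<inter> DV (snd p)"
    by (rule irred_UN[OF Zl(1) fin cl sub])
  then obtain p where p: "p \<in> Pairs" "Z l \<subseteq> DV (fst p) \<inter> DV (snd p)" by (rule bexE)
  define a where "a = fst p"
  define b where "b = snd p"
  have ab: "a \<in> Trip" "b \<in> Trip" "a \<noteq> b" using p(1) unfolding Pairs_def a_def b_def by auto
  have Zab: "Z l \<subseteq> DV a" "Z l \<subseteq> DV b" using p(2) unfolding a_def b_def by auto
  obtain N0 where N0: "N0 \<in> DV a" "N0 \<notin> DV b" using DV_witness[OF ab] by blast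
  obtain N1 where N1: "N1 \<in> DV b" "N1 \<notin> DV a" using DV_witness[OF ab(2) ab(1)] ab(3) by metis
  define Z' where "Z' n = (if n \<le> l then Z n else if n = Suc l then DV a else UNIV)" for n
  have "chainp {N. rank3 N} (l+2) Z'"
    unfolding chainp_def zclosure_rank3
  proof (intro conjI allI impI)
    fix i assume i: "i \<le> l + 2"
    show "Z' i \<subseteq> UNIV" by simp
    show "zirreducible (Z' i)"
    proof (cases "i \<le> l")
      case True then show ?thesis using ch unfolding Z'_def chainp_def by simp
    next
      case False
      then show ?thesis unfolding Z'_def using irred_DV[OF ab(1)] irred_UNIV by simp
    qed
  next
    fix i assume i: "i < l + 2"
    show "Z' i \<subset> Z' (Suc i)"
    proof -
      consider "i < l" | "i = l" | "i = Suc l" using i by linarith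
      then show ?thesis
      proof cases
        case 1 then show ?thesis using ch unfolding Z'_def chainp_def by simp
      next
        case 2
        have "N0 \<notin> Z l" using N0(2) Zab(2) by blast
        then show ?thesis unfolding Z'_def using 2 Zab(1) N0(1) by auto
      next
        case 3
        then show ?thesis unfolding Z'_def using N1(2) by auto
      qed
    qed
  qed
  then show ?thesis by blast
qed

lemma singleton_closed: "zclosed {P}"
proof -
  define F where "F = (\<lambda>(\<rho>,s). (\<lambda>N::mat36. N$\<rho>$s - P$\<rho>$s)) ` UNIV"
  have "F \<subseteq> poly_fun"
  proof
    fix f assume "f \<in> F"
    then obtain \<rho> s where "f = (\<lambda>N::mat36. N$\<rho>$s - P$\<rho>$s)" unfolding F_def by auto
    then show "f \<in> poly_fun" by (simp add: pf_sub pf_var pf_const)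
  qed
  moreover have "{P} = {N. \<forall>f\<in>F. f N = 0}"
  proof (rule set_eqI, rule iffI)
    fix N assume "N \<in> {P}" then show "N \<in> {N. \<forall>f\<in>F. f N = 0}" unfolding F_def by auto
  next
    fix N assume N: "N \<in> {N. \<forall>f\<in>F. f N = 0}"
    have "N$\<rho>$s = P$\<rho>$s" for \<rho> s
    proof -
      have mem: "(\<lambda>N::mat36. N$\<rho>$s - P$\<rho>$s) \<in> F" unfolding F_def by (rule image_eqI[where x="(\<rho>,s)"]) simp_all
      have all: "\<forall>f\<in>F. f N = 0" using N by simp
      have "(\<lambda>N::mat36. N$\<rho>$s - P$\<rho>$s) N = 0" using all mem by (rule bspec)
      then show ?thesis by simp
    qed
    then show "N \<in> {P}" by (simp add: vec_eq_iff)
  qed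
  ultimately show ?thesis unfolding zclosed_def by blast
qed

lemma singleton_irred: "zirreducible {P}"
  unfolding zirreducible_def using singleton_closed by auto

lemma six_facts: "(0::6) < 1" "(1::6) < 3" "(1::6) < 4" "(1::6) < 2"
  by (simp_all add: less_bit0_def bit0.Rep_numeral bit0.Rep_0 bit0.Rep_1)

lemma Emat_bad: "Emat 0 1 2 \<in> badset"
proof -
  let ?E = "Emat 0 1 2"
  have r: "rank3 ?E" by (rule rank3_Delta[of _ 0 1 2]) (simp add: Delta_Emat)
  have z3: "Delta ?E 0 1 3 = 0" by (rule Delta_zero_col[OF Emat_col[where s=3]]) simp_all
  have z4: "Delta ?E 0 1 4 = 0" by (rule Delta_zero_col[OF Emat_col[where s=4]]) simp_all
  have nT: "?E \<notin> T_o" using z3 six_facts unfolding T_o_def by auto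
  have nD: "?E \<notin> D_o_T"
  proof
    assume "?E \<in> D_o_T"
    then obtain i j k where ijk: "i < j" "j < k" "?E \<in> T_o_ijk i j k" unfolding D_o_T_def by blast
    have all: "\<forall>l m n. l < m \<and> m < n \<and> (l, m, n) \<noteq> (i, j, k) \<longrightarrow> Delta ?E l m n \<noteq> 0"
      using ijk(3) unfolding T_o_ijk_def by blast
    have "(0::6,1::6,3::6) \<noteq> (0,1,4)" by simp
    then have "(0::6,1::6,3::6) \<noteq> (i,j,k) \<or> (0::6,1::6,4::6) \<noteq> (i,j,k)" by metis
    then show False using all z3 z4 six_facts by metis
  qed
  show ?thesis unfolding badset_def using r nT nD by simp
qed

lemma enat_sup_add2:
  assumes ne: "A \<noteq> {}" and AB: "\<And>l. l \<in> A \<Longrightarrow> l + 2 \<in> B"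
  shows "(SUP l\<in>A. enat l) + 2 \<le> (SUP l\<in>B. enat l)"
proof (cases "finite A")
  case True
  have M: "Max A \<in> A" using Max_in[OF True ne] .
  have "(SUP l\<in>A. enat l) \<le> enat (Max A)"
    by (rule SUP_least) (simp add: Max_ge[OF True])
  then have "(SUP l\<in>A. enat l) + 2 \<le> enat (Max A) + 2" by (rule add_right_mono)
  also have "\<dots> = enat (Max A + 2)" by (simp add: numeral_eq_enat)
  also have "\<dots> \<le> (SUP l\<in>B. enat l)" by (rule SUP_upper) (rule AB[OF M])
  finally show ?thesis .
next
  case False
  have "enat n \<le> (SUP l\<in>B. enat l)" for n
  proof -
    obtain l where l: "l \<in> A" "n \<le> l" using False infinite_nat_iff_unbounded_le by blast
    have "enat n \<le> enat (l + 2)" using l(2) by simp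
    also have "\<dots> \<le> (SUP l\<in>B. enat l)" by (rule SUP_upper) (rule AB[OF l(1)])
    finally show ?thesis .
  qed
  then have "(SUP l\<in>B. enat l) = \<infinity>"
    by (metis enat_ord_simps(2) lessI not_le not_infinity_eq)
  then show ?thesis by simp
qed

lemma part3: "alg_dim ({N. rank3 N} - (T_o \<union> D_o_T)) + 2 \<le> alg_dim {N. rank3 N}"
proof -
  have "chainp badset 0 (\<lambda>_. {Emat 0 1 2})"
    unfolding chainp_def using singleton_irred sub_zclosure[of badset] Emat_bad by auto
  then have ne: "{l. \<exists>Z. chainp badset l Z} \<noteq> {}" by blast
  have "(SUP l\<in>{l. \<exists>Z. chainp badset l Z}. enat l) + 2 \<le> (SUP l\<in>{l. \<exists>Z. chainp {N. rank3 N} l Z}. enat l)"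
    by (rule enat_sup_add2[OF ne]) (use chain_ext in blast)
  then show ?thesis unfolding alg_dim_chainp badset_def[symmetric] .
qed


theorem lemma3p3:
  shows "(\<forall>N\<in>T_o. smooth_ci (QN N))
    \<and> (\<forall>N\<in>D_o_T. \<forall>x\<in>sing_pts (QN N). node_at (QN N) x)
    \<and> alg_dim ({N. rank3 N} - (T_o \<union> D_o_T)) + 2 \<le> alg_dim {N. rank3 N}"
proof (intro conjI ballI)
  fix N assume "N \<in> T_o" then show "smooth_ci (QN N)" by (rule part1)
next
  fix N x assume N: "N \<in> D_o_T" and x: "x \<in> sing_pts (QN N)"
  from N obtain i j k where "i < j" "j < k" "N \<in> T_o_ijk i j k" unfolding D_o_T_def by blast
  then show "node_at (QN N) x" using part2 x by blast
next
  show "alg_dim ({N. rank3 N} - (T_o \<union> D_o_T)) + 2 \<le> alg_dim {N. rank3 N}" by (rule part3)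
qed

end
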